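(* Let $a>0$, $q\neq0$, $p\in(4,6)$. For every $u\in\mathcal{M}_{a,r}$, $I_a(u)=\max_{t>0}I_a(t^2u(t\,\cdot))$.
   Context: $D^{1,2}(\mathbb{R}^3)=\{u\in L^6(\mathbb{R}^3):|\nabla u|\in L^2(\mathbb{R}^3)\}$. $\mathcal{K}_a(x)=\frac{1-e^{-|x|/a}}{|x|}$, $V(f,g)=\int\int\mathcal{K}_a(x-y)f(x)g(y)\,dx\,dy$, $\mathcal{E}_r$ the set of radial $u\in D^{1,2}(\mathbb{R}^3)$ with $V(u^2,u^2)<\infty$. $I_a(u)=\frac12\|\nabla u\|_2^2+\frac{q^2}{4}V(u^2,u^2)-\frac1p\|u\|_p^p$, $$J_a(u)=\frac32\|\nabla u\|_2^2-\frac{2p-3}{p}\|u\|_p^p+\frac{3q^2}{4}\int_{\mathbb{R}^3}\int_{\mathbb{R}^3}\frac{1-e^{-\frac{|x-y|}{a}}-\frac{|x-y|}{3a}e^{-\frac{|x-y|}{a}}}{|x-y|}u^2(x)u^2(y)\,dx\,dy,$$ and $\mathcal{M}_{a,r}=\{u\in\mathcal{E}_r\setminus\{0\}:J_a(u)=0\}$. *)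

theory Defs
  imports "HOL-Analysis.Analysis"
begin

type_synonym R3 = "real ^ 3"

definition test_fun :: "(R3 \<Rightarrow> real) \<Rightarrow> (R3 \<Rightarrow> R3 \<Rightarrow> real) \<Rightarrow> bool" where
  "test_fun \<phi> D \<longleftrightarrow> (\<forall>x. (\<phi> has_derivative D x) (at x))
      \<and> (\<forall>v. continuous_on UNIV (\<lambda>x. D x v))
      \<and> compact (closure {x. \<phi> x \<noteq> 0})"

definition weak_grad :: "(R3 \<Rightarrow> real) \<Rightarrow> (R3 \<Rightarrow> R3) \<Rightarrow> bool" where
  "weak_grad u G \<longleftrightarrow> G \<in> borel_measurable lebesgue \<and>
     (\<forall>\<phi> D. test_fun \<phi> D \<longrightarrow> (\<forall>i.
        integrable lebesgue (\<lambda>x. u x * D x (axis i 1)) \<and>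
        integrable lebesgue (\<lambda>x. G x $ i * \<phi> x) \<and>
        (LINT x|lebesgue. u x * D x (axis i 1)) = - (LINT x|lebesgue. G x $ i * \<phi> x)))"

definition D12 :: "(R3 \<Rightarrow> real) set" where
  "D12 = {u. u \<in> borel_measurable lebesgue \<and> integrable lebesgue (\<lambda>x. \<bar>u x\<bar> ^ 6) \<and>
            (\<exists>G. weak_grad u G \<and> integrable lebesgue (\<lambda>x. (norm (G x))\<^sup>2))}"

definition grad_sq :: "(R3 \<Rightarrow> real) \<Rightarrow> real" where
  "grad_sq u = (LINT x|lebesgue. (norm ((SOME G. weak_grad u G \<and>
                  integrable lebesgue (\<lambda>x. (norm (G x))\<^sup>2)) x))\<^sup>2)"

definition Lp_pow :: "real \<Rightarrow> (R3 \<Rightarrow> real) \<Rightarrow> real" where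
  "Lp_pow p u = (LINT x|lebesgue. \<bar>u x\<bar> powr p)"

definition Kker :: "real \<Rightarrow> R3 \<Rightarrow> real" where
  "Kker a x = (1 - exp (- norm x / a)) / norm x"

definition Lker :: "real \<Rightarrow> R3 \<Rightarrow> real" where
  "Lker a x = (1 - exp (- norm x / a) - norm x / (3 * a) * exp (- norm x / a)) / norm x"

definition Vnn :: "real \<Rightarrow> (R3 \<Rightarrow> real) \<Rightarrow> (R3 \<Rightarrow> real) \<Rightarrow> ennreal" where
  "Vnn a f g = (\<integral>\<^sup>+ x. (\<integral>\<^sup>+ y. ennreal (Kker a (x - y) * f x * g y) \<partial>lebesgue) \<partial>lebesgue)"

definition V :: "real \<Rightarrow> (R3 \<Rightarrow> real) \<Rightarrow> (R3 \<Rightarrow> real) \<Rightarrow> real" where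
  "V a f g = (LINT x|lebesgue. LINT y|lebesgue. Kker a (x - y) * f x * g y)"

definition W :: "real \<Rightarrow> (R3 \<Rightarrow> real) \<Rightarrow> (R3 \<Rightarrow> real) \<Rightarrow> real" where
  "W a f g = (LINT x|lebesgue. LINT y|lebesgue. Lker a (x - y) * f x * g y)"

definition radial :: "(R3 \<Rightarrow> real) \<Rightarrow> bool" where
  "radial u \<longleftrightarrow> (\<forall>x y. norm x = norm y \<longrightarrow> u x = u y)"

definition E_r :: "real \<Rightarrow> (R3 \<Rightarrow> real) set" where
  "E_r a = {u \<in> D12. radial u \<and> Vnn a (\<lambda>x. (u x)\<^sup>2) (\<lambda>x. (u x)\<^sup>2) < \<infinity>}"

definition I_a :: "real \<Rightarrow> real \<Rightarrow> real \<Rightarrow> (R3 \<Rightarrow> real) \<Rightarrow> real" where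
  "I_a a q p u = 1/2 * grad_sq u + q\<^sup>2 / 4 * V a (\<lambda>x. (u x)\<^sup>2) (\<lambda>x. (u x)\<^sup>2) - 1/p * Lp_pow p u"

definition J_a :: "real \<Rightarrow> real \<Rightarrow> real \<Rightarrow> (R3 \<Rightarrow> real) \<Rightarrow> real" where
  "J_a a q p u = 3/2 * grad_sq u - (2*p - 3)/p * Lp_pow p u
                 + 3 * q\<^sup>2 / 4 * W a (\<lambda>x. (u x)\<^sup>2) (\<lambda>x. (u x)\<^sup>2)"

definition M_ar :: "real \<Rightarrow> real \<Rightarrow> real \<Rightarrow> (R3 \<Rightarrow> real) set" where
  "M_ar a q p = {u \<in> E_r a. u \<noteq> (\<lambda>x. 0) \<and> J_a a q p u = 0}"

definition dil :: "real \<Rightarrow> (R3 \<Rightarrow> real) \<Rightarrow> R3 \<Rightarrow> real" where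
  "dil t u = (\<lambda>x. t\<^sup>2 * u (t *\<^sub>R x))"

end

theory Submission
  imports Defs "HOL-Real_Asymp.Real_Asymp"
begin
lemma lebesgue_scale3:
  fixes c :: real assumes "c \<noteq> 0"
  shows "lebesgue = density (distr lebesgue lebesgue (\<lambda>x::R3. c *\<^sub>R x)) (\<lambda>_. ennreal (\<bar>c\<bar> ^ 3))"
    and "(\<lambda>x::R3. c *\<^sub>R x) \<in> lebesgue \<rightarrow>\<^sub>M lebesgue"
proof -
  have T: "(\<lambda>x::R3. 0 + (\<Sum>j\<in>Basis. (c * (x \<bullet> j)) *\<^sub>R j)) = (\<lambda>x. c *\<^sub>R x)"
    unfolding scaleR_scaleR[symmetric] scaleR_sum_right[symmetric] by (simp add: euclidean_representation)
  show "lebesgue = density (distr lebesgue lebesgue (\<lambda>x::R3. c *\<^sub>R x)) (\<lambda>_. ennreal (\<bar>c\<bar> ^ 3))"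
    using lebesgue_affine_euclidean[of "\<lambda>_::R3. c" 0] assms T by simp
  show "(\<lambda>x::R3. c *\<^sub>R x) \<in> lebesgue \<rightarrow>\<^sub>M lebesgue"
    using lebesgue_affine_measurable[of "\<lambda>_::R3. c" 0] assms T by simp
qed

lemma integral_scale3_meas:
  fixes f :: "R3 \<Rightarrow> real" and c :: real
  assumes c: "c \<noteq> 0" and f: "f \<in> borel_measurable lebesgue"
  shows "integrable lebesgue f \<longleftrightarrow> integrable lebesgue (\<lambda>x. f (c *\<^sub>R x))"
    and "(\<integral>x. f x \<partial>lebesgue) = \<bar>c\<bar>^3 * (\<integral>x. f (c *\<^sub>R x) \<partial>lebesgue)"
proof -
  note T = lebesgue_scale3[OF c]
  have fm: "(\<lambda>x. \<bar>c\<bar> ^ 3 * f x) \<in> borel_measurable lebesgue" using f by measurable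
  have fT: "(\<lambda>x. f (c *\<^sub>R x)) \<in> borel_measurable lebesgue"
    using measurable_compose[OF T(2) f] by simp
  have "integrable lebesgue f \<longleftrightarrow> integrable (density (distr lebesgue lebesgue (\<lambda>x::R3. c *\<^sub>R x)) (\<lambda>_. ennreal (\<bar>c\<bar> ^ 3))) f"
    using T(1) by simp
  also have "\<dots> \<longleftrightarrow> integrable (distr lebesgue lebesgue (\<lambda>x::R3. c *\<^sub>R x)) (\<lambda>x. \<bar>c\<bar>^3 *\<^sub>R f x)"
    using f by (subst integrable_density) (auto simp: f intro: borel_measurable_scaleR)
  also have "\<dots> \<longleftrightarrow> integrable lebesgue (\<lambda>x. \<bar>c\<bar>^3 *\<^sub>R f (c *\<^sub>R x))"
    by (subst integrable_distr_eq) (auto simp: f T(2) fm)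
  also have "\<dots> \<longleftrightarrow> integrable lebesgue (\<lambda>x. f (c *\<^sub>R x))"
    using c by simp
  finally show "integrable lebesgue f \<longleftrightarrow> integrable lebesgue (\<lambda>x. f (c *\<^sub>R x))" .
  have "(\<integral>x. f x \<partial>lebesgue) = (\<integral>x. f x \<partial>(density (distr lebesgue lebesgue (\<lambda>x::R3. c *\<^sub>R x)) (\<lambda>_. ennreal (\<bar>c\<bar> ^ 3))))"
    using T(1) by simp
  also have "\<dots> = (\<integral>x. \<bar>c\<bar>^3 *\<^sub>R f x \<partial>(distr lebesgue lebesgue (\<lambda>x::R3. c *\<^sub>R x)))"
    by (subst integral_density) (auto simp: f)
  also have "\<dots> = (\<integral>x. \<bar>c\<bar>^3 *\<^sub>R f (c *\<^sub>R x) \<partial>lebesgue)"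
    by (subst integral_distr) (auto simp: f T(2) fm)
  also have "\<dots> = \<bar>c\<bar>^3 * (\<integral>x. f (c *\<^sub>R x) \<partial>lebesgue)"
    by simp
  finally show "(\<integral>x. f x \<partial>lebesgue) = \<bar>c\<bar>^3 * (\<integral>x. f (c *\<^sub>R x) \<partial>lebesgue)" .
qed

lemma meas_scale3_iff:
  fixes f :: "R3 \<Rightarrow> real" and c :: real
  assumes c: "c \<noteq> 0"
  shows "(\<lambda>x. f (c *\<^sub>R x)) \<in> borel_measurable lebesgue \<longleftrightarrow> f \<in> borel_measurable lebesgue"
proof
  assume "f \<in> borel_measurable lebesgue"
  then show "(\<lambda>x. f (c *\<^sub>R x)) \<in> borel_measurable lebesgue"
    using measurable_compose[OF lebesgue_scale3(2)[OF c]] by simp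
next
  assume h: "(\<lambda>x. f (c *\<^sub>R x)) \<in> borel_measurable lebesgue"
  have c': "inverse c \<noteq> 0" using c by simp
  have "(\<lambda>x. (\<lambda>y. f (c *\<^sub>R y)) (inverse c *\<^sub>R x)) \<in> borel_measurable lebesgue"
    using measurable_compose[OF lebesgue_scale3(2)[OF c'] h] by simp
  then show "f \<in> borel_measurable lebesgue" using c by simp
qed

lemma integral_scale3:
  fixes f :: "R3 \<Rightarrow> real" and c :: real
  assumes c: "c \<noteq> 0"
  shows "integrable lebesgue (\<lambda>x. f (c *\<^sub>R x)) \<longleftrightarrow> integrable lebesgue f"
    and "(\<integral>x. f x \<partial>lebesgue) = \<bar>c\<bar>^3 * (\<integral>x. f (c *\<^sub>R x) \<partial>lebesgue)"
proof -
  show "integrable lebesgue (\<lambda>x. f (c *\<^sub>R x)) \<longleftrightarrow> integrable lebesgue f"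
  proof (cases "f \<in> borel_measurable lebesgue")
    case True then show ?thesis using integral_scale3_meas(1)[OF c] by blast
  next
    case False
    then have "(\<lambda>x. f (c *\<^sub>R x)) \<notin> borel_measurable lebesgue" using meas_scale3_iff[OF c] by blast
    with False show ?thesis by (auto dest: borel_measurable_integrable)
  qed
  show "(\<integral>x. f x \<partial>lebesgue) = \<bar>c\<bar>^3 * (\<integral>x. f (c *\<^sub>R x) \<partial>lebesgue)"
  proof (cases "f \<in> borel_measurable lebesgue")
    case True then show ?thesis using integral_scale3_meas(2)[OF c] by blast
  next
    case False
    then have "(\<lambda>x. f (c *\<^sub>R x)) \<notin> borel_measurable lebesgue" using meas_scale3_iff[OF c] by blast
    have "\<not> integrable lebesgue f" "\<not> integrable lebesgue (\<lambda>x. f (c *\<^sub>R x))"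
      using False \<open>(\<lambda>x. f (c *\<^sub>R x)) \<notin> borel_measurable lebesgue\<close> borel_measurable_integrable by blast+
    then show ?thesis by (simp add: not_integrable_integral_eq)
  qed
qed

lemma Kker_scale: assumes "a > 0" "t > 0"
  shows "Kker (a*t) (t *\<^sub>R z) = Kker a z / t"
  using assms by (simp add: Kker_def field_simps)

lemma Lker_scale: assumes "a > 0" "t > 0"
  shows "Lker (a*t) (t *\<^sub>R z) = Lker a z / t"
  using assms by (simp add: Lker_def field_simps)

lemma nested_scale:
  fixes k :: "R3 \<Rightarrow> real" and f g :: "R3 \<Rightarrow> real" and t :: real
  assumes t: "t > 0" and kk: "\<And>z. kk (t *\<^sub>R z) = k z / t"
  shows "(LINT x|lebesgue. LINT y|lebesgue. k (x - y) * (t^4 * f (t *\<^sub>R x)) * (t^4 * g (t *\<^sub>R y)))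
       = t^3 * (LINT x|lebesgue. LINT y|lebesgue. kk (x - y) * f x * g y)"
proof -
  have t0: "t \<noteq> 0" using t by simp
  have inner: "(LINT y|lebesgue. kk (t *\<^sub>R x - y) * f (t *\<^sub>R x) * g y)
      = t^2 * (LINT y|lebesgue. k (x - y) * f (t *\<^sub>R x) * g (t *\<^sub>R y))" for x
  proof -
    have "(LINT y|lebesgue. kk (t *\<^sub>R x - y) * f (t *\<^sub>R x) * g y)
        = t^3 * (LINT y|lebesgue. kk (t *\<^sub>R x - t *\<^sub>R y) * f (t *\<^sub>R x) * g (t *\<^sub>R y))"
      using integral_scale3(2)[OF t0, of "\<lambda>y. kk (t *\<^sub>R x - y) * f (t *\<^sub>R x) * g y"] t by simp
    also have "\<dots> = t^3 * (LINT y|lebesgue. (1/t) * (k (x - y) * f (t *\<^sub>R x) * g (t *\<^sub>R y)))"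
      by (simp add: scaleR_diff_right[symmetric] kk)
    also have "\<dots> = t^2 * (LINT y|lebesgue. k (x - y) * f (t *\<^sub>R x) * g (t *\<^sub>R y))"
      using t by (simp add: power3_eq_cube power2_eq_square)
    finally show ?thesis .
  qed
  have "t^3 * (LINT x|lebesgue. LINT y|lebesgue. kk (x - y) * f x * g y)
      = t^3 * (t^3 * (LINT x|lebesgue. LINT y|lebesgue. kk (t *\<^sub>R x - y) * f (t *\<^sub>R x) * g y))"
    using integral_scale3(2)[OF t0, of "\<lambda>x. LINT y|lebesgue. kk (x - y) * f x * g y"] t by simp
  also have "\<dots> = t^3 * (t^3 * (LINT x|lebesgue. t^2 * (LINT y|lebesgue. k (x - y) * f (t *\<^sub>R x) * g (t *\<^sub>R y))))"
    by (simp add: inner)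
  also have "\<dots> = t^8 * (LINT x|lebesgue. LINT y|lebesgue. k (x - y) * f (t *\<^sub>R x) * g (t *\<^sub>R y))"
    by (simp add: power_add[symmetric] mult.assoc[symmetric])
  also have "\<dots> = (LINT x|lebesgue. LINT y|lebesgue. t^8 * (k (x - y) * f (t *\<^sub>R x) * g (t *\<^sub>R y)))"
    by simp
  also have "\<dots> = (LINT x|lebesgue. LINT y|lebesgue. k (x - y) * (t^4 * f (t *\<^sub>R x)) * (t^4 * g (t *\<^sub>R y)))"
    by (simp add: power_add[symmetric] algebra_simps)
  finally show ?thesis by simp
qed

lemma dil_sq: "(dil t u x)\<^sup>2 = t^4 * (u (t *\<^sub>R x))\<^sup>2"
  by (simp add: dil_def power_mult_distrib)

lemma V_dil: assumes "a > 0" "t > 0"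
  shows "V a (\<lambda>x. (dil t u x)\<^sup>2) (\<lambda>x. (dil t u x)\<^sup>2) = t^3 * V (a*t) (\<lambda>x. (u x)\<^sup>2) (\<lambda>x. (u x)\<^sup>2)"
  unfolding V_def dil_sq using nested_scale[OF assms(2), of "Kker (a*t)" "Kker a"] Kker_scale[OF assms] by simp

lemma W_dil: assumes "a > 0" "t > 0"
  shows "W a (\<lambda>x. (dil t u x)\<^sup>2) (\<lambda>x. (dil t u x)\<^sup>2) = t^3 * W (a*t) (\<lambda>x. (u x)\<^sup>2) (\<lambda>x. (u x)\<^sup>2)"
  unfolding W_def dil_sq using nested_scale[OF assms(2), of "Lker (a*t)" "Lker a"] Lker_scale[OF assms] by simp

lemma Lp_dil: assumes "t > 0" "p > 0"
  shows "Lp_pow p (dil t u) = t powr (2*p - 3) * Lp_pow p u"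
proof -
  have t0: "t \<noteq> 0" using assms by simp
  have "Lp_pow p u = t^3 * (LINT x|lebesgue. \<bar>u (t *\<^sub>R x)\<bar> powr p)"
    unfolding Lp_pow_def using integral_scale3(2)[OF t0, of "\<lambda>x. \<bar>u x\<bar> powr p"] assms by simp
  moreover have "Lp_pow p (dil t u) = t powr (2*p) * (LINT x|lebesgue. \<bar>u (t *\<^sub>R x)\<bar> powr p)"
  proof -
    have "\<bar>dil t u x\<bar> powr p = t powr (2*p) * \<bar>u (t *\<^sub>R x)\<bar> powr p" for x
    proof -
      have e: "t powr (2*p) = (t^2) powr p"
        using assms powr_powr[of t 2 p] powr_realpow[of t 2] by simp
      have "\<bar>dil t u x\<bar> = t^2 * \<bar>u (t *\<^sub>R x)\<bar>" by (simp add: dil_def abs_mult)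
      then show ?thesis using assms by (simp add: e powr_mult)
    qed
    then show ?thesis unfolding Lp_pow_def by simp
  qed
  moreover have "t powr (2*p) = t powr (2*p - 3) * t^3"
    using assms by (simp add: powr_diff powr_realpow)
  ultimately show ?thesis by simp
qed

lemma test_fun_scale:
  assumes t: "t > 0" and tf: "test_fun \<phi> D"
  shows "test_fun (\<lambda>y. \<phi> ((1/t) *\<^sub>R y)) (\<lambda>y v. D ((1/t) *\<^sub>R y) ((1/t) *\<^sub>R v))"
proof -
  have d: "(\<phi> has_derivative D x) (at x)" for x using tf by (simp add: test_fun_def)
  have c: "continuous_on UNIV (\<lambda>x. D x v)" for v using tf by (simp add: test_fun_def)
  have k: "compact (closure {x. \<phi> x \<noteq> 0})" using tf by (simp add: test_fun_def)
  have 1: "((\<lambda>y. \<phi> ((1/t) *\<^sub>R y)) has_derivative (\<lambda>v. D ((1/t) *\<^sub>R y) ((1/t) *\<^sub>R v))) (at y)" for y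
  proof -
    have "((\<lambda>y. (1/t) *\<^sub>R y) has_derivative (\<lambda>v. (1/t) *\<^sub>R v)) (at y)"
      by (intro derivative_intros)
    from diff_chain_at[OF this d[of "(1/t) *\<^sub>R y"]] show ?thesis by (simp add: o_def)
  qed
  have 2: "continuous_on UNIV (\<lambda>y. D ((1/t) *\<^sub>R y) ((1/t) *\<^sub>R v))" for v
  proof -
    have "continuous_on UNIV (\<lambda>y. (1/t) *\<^sub>R (y::R3))" by (intro continuous_intros)
    moreover have "continuous_on (range ((*\<^sub>R) (1 / t))) (\<lambda>x. D x ((1 / t) *\<^sub>R v))"
      using c continuous_on_subset by blast
    ultimately show ?thesis using continuous_on_compose[of UNIV "\<lambda>y. (1/t) *\<^sub>R (y::R3)" "\<lambda>x. D x ((1/t) *\<^sub>R v)"]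
      by (simp add: o_def)
  qed
  have 3: "compact (closure {y. \<phi> ((1/t) *\<^sub>R y) \<noteq> 0})"
  proof -
    have "{y. \<phi> ((1/t) *\<^sub>R y) \<noteq> 0} \<subseteq> (\<lambda>x. t *\<^sub>R x) ` closure {x. \<phi> x \<noteq> 0}"
    proof
      fix y assume "y \<in> {y. \<phi> ((1/t) *\<^sub>R y) \<noteq> 0}"
      then have "(1/t) *\<^sub>R y \<in> closure {x. \<phi> x \<noteq> 0}" using closure_subset[of "{x. \<phi> x \<noteq> 0}"] by auto
      moreover have "y = t *\<^sub>R ((1/t) *\<^sub>R y)" using t by simp
      ultimately show "y \<in> (\<lambda>x. t *\<^sub>R x) ` closure {x. \<phi> x \<noteq> 0}" by blast
    qed
    moreover have "compact ((\<lambda>x. t *\<^sub>R x) ` closure {x. \<phi> x \<noteq> 0})"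
      using compact_scaling[OF k] by simp
    ultimately have "bounded {y. \<phi> ((1/t) *\<^sub>R y) \<noteq> 0}"
      using compact_imp_bounded bounded_subset by blast
    then show ?thesis using compact_closure by blast
  qed
  show ?thesis unfolding test_fun_def using 1 2 3 by blast
qed

lemma weak_grad_dil:
  assumes t: "t > 0" and wg: "weak_grad u G"
  shows "weak_grad (dil t u) (\<lambda>x. t^3 *\<^sub>R G (t *\<^sub>R x))"
  unfolding weak_grad_def
proof (intro conjI allI impI)
  have t0: "t \<noteq> 0" using t by simp
  have Gm: "G \<in> borel_measurable lebesgue" using wg by (simp add: weak_grad_def)
  show "(\<lambda>x. t^3 *\<^sub>R G (t *\<^sub>R x)) \<in> borel_measurable lebesgue"
    using measurable_compose[OF lebesgue_scale3(2)[OF t0] Gm] by (intro borel_measurable_scaleR) auto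
  fix \<phi> D i assume tf: "test_fun \<phi> D"
  define \<phi>' where "\<phi>' = (\<lambda>y. \<phi> ((1/t) *\<^sub>R y))"
  define D' where "D' = (\<lambda>y v. D ((1/t) *\<^sub>R y) ((1/t) *\<^sub>R v))"
  have tf': "test_fun \<phi>' D'" unfolding \<phi>'_def D'_def by (rule test_fun_scale[OF t tf])
  from wg tf' have w1: "integrable lebesgue (\<lambda>x. u x * D' x (axis i 1))"
    and w2: "integrable lebesgue (\<lambda>x. G x $ i * \<phi>' x)"
    and w3: "(LINT x|lebesgue. u x * D' x (axis i 1)) = - (LINT x|lebesgue. G x $ i * \<phi>' x)"
    unfolding weak_grad_def by blast+
  have lin: "linear (D x)" for x
    using tf unfolding test_fun_def by (meson has_derivative_linear)
  have e1: "dil t u x * D x (axis i 1) = t^3 * (u (t *\<^sub>R x) * D' (t *\<^sub>R x) (axis i 1))" for x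
  proof -
    have "D' (t *\<^sub>R x) (axis i 1) = (1/t) * D x (axis i 1)"
      using t linear_scale[OF lin[of x], of "1/t" "axis i 1"] by (simp add: D'_def)
    then show ?thesis using t by (simp add: dil_def power3_eq_cube power2_eq_square)
  qed
  have e2: "(t^3 *\<^sub>R G (t *\<^sub>R x)) $ i * \<phi> x = t^3 * (G (t *\<^sub>R x) $ i * \<phi>' (t *\<^sub>R x))" for x
    using t by (simp add: \<phi>'_def)
  show "integrable lebesgue (\<lambda>x. dil t u x * D x (axis i 1))"
    unfolding e1 using integral_scale3(1)[OF t0, of "\<lambda>x. u x * D' x (axis i 1)"] w1 by simp
  show "integrable lebesgue (\<lambda>x. (t^3 *\<^sub>R G (t *\<^sub>R x)) $ i * \<phi> x)"
    unfolding e2 using integral_scale3(1)[OF t0, of "\<lambda>x. G x $ i * \<phi>' x"] w2 by simp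
  have "(LINT x|lebesgue. dil t u x * D x (axis i 1)) = (LINT x|lebesgue. u x * D' x (axis i 1))"
    unfolding e1 using integral_scale3(2)[OF t0, of "\<lambda>x. u x * D' x (axis i 1)"] t by simp
  moreover have "(LINT x|lebesgue. (t^3 *\<^sub>R G (t *\<^sub>R x)) $ i * \<phi> x) = (LINT x|lebesgue. G x $ i * \<phi>' x)"
    unfolding e2 using integral_scale3(2)[OF t0, of "\<lambda>x. G x $ i * \<phi>' x"] t by simp
  ultimately show "(LINT x|lebesgue. dil t u x * D x (axis i 1)) = - (LINT x|lebesgue. (t^3 *\<^sub>R G (t *\<^sub>R x)) $ i * \<phi> x)"
    using w3 by simp
qed

lemma grad_int_dil:
  fixes G :: "R3 \<Rightarrow> R3"
  assumes t: "t > 0" and G: "integrable lebesgue (\<lambda>x. (norm (G x))\<^sup>2)"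
  shows "integrable lebesgue (\<lambda>x. (norm (t^3 *\<^sub>R G (t *\<^sub>R x)))\<^sup>2)"
    and "(LINT x|lebesgue. (norm (t^3 *\<^sub>R G (t *\<^sub>R x)))\<^sup>2) = t^3 * (LINT x|lebesgue. (norm (G x))\<^sup>2)"
proof -
  have t0: "t \<noteq> 0" using t by simp
  have e: "(norm (t^3 *\<^sub>R G (t *\<^sub>R x)))\<^sup>2 = t^6 * (norm (G (t *\<^sub>R x)))\<^sup>2" for x
    using t by (simp add: power_mult_distrib power_mult[symmetric])
  show "integrable lebesgue (\<lambda>x. (norm (t^3 *\<^sub>R G (t *\<^sub>R x)))\<^sup>2)"
    unfolding e using integral_scale3(1)[OF t0, of "\<lambda>x. (norm (G x))\<^sup>2"] G by simp
  have "(LINT x|lebesgue. (norm (G x))\<^sup>2) = t^3 * (LINT x|lebesgue. (norm (G (t *\<^sub>R x)))\<^sup>2)"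
    using integral_scale3(2)[OF t0, of "\<lambda>x. (norm (G x))\<^sup>2"] t by simp
  then show "(LINT x|lebesgue. (norm (t^3 *\<^sub>R G (t *\<^sub>R x)))\<^sup>2) = t^3 * (LINT x|lebesgue. (norm (G x))\<^sup>2)"
    unfolding e by (simp add: power_add[symmetric] mult.assoc[symmetric])
qed

lemma borel_to_leb: "f \<in> borel_measurable borel \<Longrightarrow> f \<in> borel_measurable (lebesgue :: R3 measure)"
  by (simp add: measurable_completion)

definition bet :: "real \<Rightarrow> real \<Rightarrow> real \<Rightarrow> real" where
  "bet l h s = (max 0 ((s - l) * (h - s)))^2"
definition dbet :: "real \<Rightarrow> real \<Rightarrow> real \<Rightarrow> real" where
  "dbet l h s = 2 * max 0 ((s - l) * (h - s)) * (h + l - 2 * s)"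

lemma sq_max_deriv: "((\<lambda>y::real. (max 0 y)^2) has_real_derivative (2 * max 0 y)) (at y)"
proof (cases "y = 0")
  case True
  have "((\<lambda>h::real. ((max 0 (0 + h))^2 - (max 0 0)^2) / h) \<longlongrightarrow> 0) (at 0)"
  proof (rule Lim_null_comparison)
    show "\<forall>\<^sub>F x in at 0. norm (((max 0 (0 + x))^2 - (max 0 0)^2) / x) \<le> \<bar>x\<bar>"
      by (intro always_eventually allI) (auto simp: max_def abs_if power2_eq_square divide_simps)
    show "((\<lambda>x::real. \<bar>x\<bar>) \<longlongrightarrow> 0) (at 0)"
      using tendsto_rabs[OF tendsto_ident_at[of "0::real" UNIV]] by simp
  qed
  then show ?thesis using True by (simp add: DERIV_def)
next
  case False
  show ?thesis
  proof (cases "y > 0")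
    case True
    have "((\<lambda>y. y^2) has_real_derivative 2 * max 0 y) (at y)"
      using True by (auto intro!: derivative_eq_intros)
    then show ?thesis
      by (rule has_field_derivative_transform_within_open[where S="{0<..}"]) (use True in auto)
  next
    case False2: False
    then have "y < 0" using False by simp
    have "((\<lambda>y. 0) has_real_derivative 0) (at y)" by simp
    then have "((\<lambda>y. (max 0 y)^2) has_real_derivative 0) (at y)"
      by (rule has_field_derivative_transform_within_open[where S="{..<0}"]) (use \<open>y < 0\<close> in auto)
    then show ?thesis using \<open>y < 0\<close> by simp
  qed
qed

lemma bet_deriv: "(bet l h has_real_derivative dbet l h s) (at s)"
proof -
  have i: "((\<lambda>s. (s - l) * (h - s)) has_real_derivative (h + l - 2 * s)) (at s)"
    by (auto intro!: derivative_eq_intros)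
  have "((\<lambda>s. (max 0 ((s - l) * (h - s)))^2) has_real_derivative (2 * max 0 ((s - l) * (h - s))) * (h + l - 2 * s)) (at s)"
    using DERIV_chain2[OF sq_max_deriv i] .
  then show ?thesis unfolding bet_def[abs_def] dbet_def by simp
qed

lemma bet_cont: "continuous_on UNIV (bet l h)"
  unfolding bet_def[abs_def] by (intro continuous_intros)
lemma dbet_cont: "continuous_on UNIV (dbet l h)"
  unfolding dbet_def[abs_def] by (intro continuous_intros)

definition bump :: "R3 \<Rightarrow> R3 \<Rightarrow> R3 \<Rightarrow> real" where
  "bump lo hi x = (\<Prod>i\<in>UNIV. bet (lo$i) (hi$i) (x$i))"
definition dbump :: "R3 \<Rightarrow> R3 \<Rightarrow> R3 \<Rightarrow> R3 \<Rightarrow> real" where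
  "dbump lo hi x v = (\<Sum>i\<in>UNIV. (dbet (lo$i) (hi$i) (x$i) * v$i) * (\<Prod>j\<in>UNIV-{i}. bet (lo$j) (hi$j) (x$j)))"

lemma bump_deriv: "(bump lo hi has_derivative dbump lo hi x) (at x)"
proof -
  have c: "((\<lambda>x. bet (lo$i) (hi$i) (x$i)) has_derivative (\<lambda>v. dbet (lo$i) (hi$i) (x$i) * v$i)) (at x)" for i
  proof -
    have "((\<lambda>x::R3. x$i) has_derivative (\<lambda>v. v$i)) (at x)"
      by (rule bounded_linear_imp_has_derivative) (rule bounded_linear_vec_nth)
    moreover have "(bet (lo$i) (hi$i) has_derivative (*) (dbet (lo$i) (hi$i) (x$i))) (at (x$i))"
      using bet_deriv unfolding has_field_derivative_def by blast
    ultimately show ?thesis using has_derivative_compose by fastforce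
  qed
  show ?thesis unfolding bump_def[abs_def] dbump_def[abs_def]
    by (rule has_derivative_prod) (rule c)
qed

lemma bet_comp_cont: "continuous_on UNIV (\<lambda>x::R3. bet l h (x$i))"
  by (rule continuous_on_compose2[OF bet_cont]) (auto intro: continuous_intros)
lemma dbet_comp_cont: "continuous_on UNIV (\<lambda>x::R3. dbet l h (x$i))"
  by (rule continuous_on_compose2[OF dbet_cont]) (auto intro: continuous_intros)

lemma bet_nz: assumes "bet l h s \<noteq> 0" shows "0 < (s - l) * (h - s)"
proof (rule ccontr)
  assume "\<not> 0 < (s - l) * (h - s)"
  then have "max 0 ((s - l) * (h - s)) = 0" by simp
  then show False using assms by (simp add: bet_def)
qed

lemma dbump_cont: "continuous_on UNIV (\<lambda>x. dbump lo hi x v)"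
  unfolding dbump_def
  by (intro continuous_intros continuous_on_sum continuous_on_prod continuous_on_mult dbet_comp_cont bet_comp_cont)

lemma bump_cont: "continuous_on UNIV (bump lo hi)"
  unfolding bump_def[abs_def]
  by (intro continuous_on_prod bet_comp_cont)

lemma bump_nonneg: "0 \<le> bump lo hi x"
  unfolding bump_def bet_def by (intro prod_nonneg) auto

lemma prod_pos_between:
  fixes l h s :: real assumes "l \<le> h" "0 < (s - l) * (h - s)" shows "l < s \<and> s < h"
proof (rule ccontr)
  assume "\<not> (l < s \<and> s < h)"
  then consider "s \<le> l" | "h \<le> s" by linarith
  then have "(s - l) * (h - s) \<le> 0"
  proof cases
    case 1 then show ?thesis using assms(1) by (intro mult_nonpos_nonneg) auto
  next
    case 2 then show ?thesis using assms(1) by (intro mult_nonneg_nonpos) auto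
  qed
  with assms(2) show False by simp
qed

lemma bump_pos_iff:
  assumes ord: "\<forall>i. lo$i \<le> hi$i"
  shows "0 < bump lo hi x \<longleftrightarrow> x \<in> box lo hi"
proof
  assume "0 < bump lo hi x"
  then have "bump lo hi x \<noteq> 0" by simp
  then have "\<forall>i. bet (lo$i) (hi$i) (x$i) \<noteq> 0" unfolding bump_def by (simp add: prod_zero_iff)
  then have "\<forall>i. 0 < (x$i - lo$i) * (hi$i - x$i)" using bet_nz by blast
  then have "\<forall>i. lo$i < x$i \<and> x$i < hi$i"
    using prod_pos_between ord by blast
  then show "x \<in> box lo hi" by (simp add: mem_box_cart(1))
next
  assume "x \<in> box lo hi"
  then have "\<forall>i. lo$i < x$i \<and> x$i < hi$i" by (simp add: mem_box_cart(1))
  have "0 < bet (lo$i) (hi$i) (x$i)" for i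
  proof -
    have P: "0 < (x$i - lo$i) * (hi$i - x$i)" using \<open>\<forall>i. lo$i < x$i \<and> x$i < hi$i\<close> by simp
    then have eq: "max 0 ((x$i - lo$i) * (hi$i - x$i)) = (x$i - lo$i) * (hi$i - x$i)" using max_absorb2 less_imp_le by blast
    show ?thesis by (simp only: bet_def eq) (rule zero_less_power[OF P])
  qed
  then have "\<forall>i. 0 < bet (lo$i) (hi$i) (x$i)" by blast
  then show "0 < bump lo hi x" unfolding bump_def by (intro prod_pos) auto
qed

lemma bump_zero: assumes "\<forall>i. lo$i \<le> hi$i" "x \<notin> box lo hi" shows "bump lo hi x = 0"
proof -
  have "\<not> 0 < bump lo hi x" using bump_pos_iff[OF assms(1)] assms(2) by blast
  then show ?thesis using bump_nonneg[of lo hi x] by linarith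
qed

lemma bump_ge1:
  assumes "x \<in> cbox lo hi"
  shows "1 \<le> bump (\<chi> i. lo$i - 1) (\<chi> i. hi$i + 1) x"
proof -
  have "\<forall>i. lo$i \<le> x$i \<and> x$i \<le> hi$i" using assms by (simp add: mem_box_cart(2))
  then have "1 \<le> bet (lo$i - 1) (hi$i + 1) (x$i)" for i
  proof -
    assume a: "\<forall>i. lo$i \<le> x$i \<and> x$i \<le> hi$i"
    have "1 \<le> (x$i - (lo$i - 1)) * (hi$i + 1 - x$i)"
      using a by (intro mult_ge1_I) auto
    then have "max 0 ((x$i - (lo$i - 1)) * (hi$i + 1 - x$i)) = (x$i - (lo$i - 1)) * (hi$i + 1 - x$i)"
      by simp
    with \<open>1 \<le> (x$i - (lo$i - 1)) * (hi$i + 1 - x$i)\<close> show ?thesis unfolding bet_def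
      by (simp add: one_le_power)
  qed
  then show ?thesis unfolding bump_def by (intro prod_ge_1) auto
qed

lemma test_fun_bump: assumes ord: "\<forall>i. lo$i \<le> hi$i" shows "test_fun (bump lo hi) (dbump lo hi)"
proof -
  have "{x. bump lo hi x \<noteq> 0} \<subseteq> cbox lo hi"
    using bump_zero[OF ord] box_subset_cbox by blast
  then have "bounded {x. bump lo hi x \<noteq> 0}" using bounded_cbox bounded_subset by blast
  then show ?thesis unfolding test_fun_def using bump_deriv dbump_cont compact_closure by blast
qed

definition phin :: "real \<Rightarrow> R3 \<Rightarrow> R3 \<Rightarrow> R3 \<Rightarrow> real" where
  "phin n lo hi x = n * bump lo hi x / (1 + n * bump lo hi x)"
definition dphin :: "real \<Rightarrow> R3 \<Rightarrow> R3 \<Rightarrow> R3 \<Rightarrow> R3 \<Rightarrow> real" where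
  "dphin n lo hi x v = n / (1 + n * bump lo hi x)^2 * dbump lo hi x v"

lemma test_fun_phin:
  assumes n: "n \<ge> 0" and ord: "\<forall>i. lo$i \<le> hi$i"
  shows "test_fun (phin n lo hi) (dphin n lo hi)"
proof -
  have pos: "0 < 1 + n * bump lo hi x" for x
  proof -
    have "0 \<le> n * bump lo hi x" using n bump_nonneg[of lo hi x] by simp
    then show ?thesis by linarith
  qed
  have d: "(phin n lo hi has_derivative dphin n lo hi x) (at x)" for x
  proof -
    have "((\<lambda>s. n * s / (1 + n * s)) has_real_derivative n / (1 + n * bump lo hi x)^2) (at (bump lo hi x))"
      using pos[of x] by (auto intro!: derivative_eq_intros simp: field_simps power2_eq_square)
    then have "((\<lambda>s. n * s / (1 + n * s)) has_derivative (*) (n / (1 + n * bump lo hi x)^2)) (at (bump lo hi x))"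
      unfolding has_field_derivative_def .
    from has_derivative_compose[OF bump_deriv this]
    show ?thesis unfolding phin_def[abs_def] dphin_def[abs_def] by simp
  qed
  have nz: "1 + n * bump lo hi x \<noteq> 0" for x using pos[of x] by linarith
  have c: "continuous_on UNIV (\<lambda>x. dphin n lo hi x v)" for v
    unfolding dphin_def
    by (intro continuous_intros dbump_cont bump_cont) (simp add: nz)
  have "{x. phin n lo hi x \<noteq> 0} \<subseteq> cbox lo hi"
    using bump_zero[OF ord] box_subset_cbox by (fastforce simp: phin_def)
  then have "bounded {x. phin n lo hi x \<noteq> 0}" using bounded_cbox bounded_subset by blast
  then show ?thesis unfolding test_fun_def using d c compact_closure by blast
qed

lemma phin_bounds: assumes "n \<ge> 0" shows "0 \<le> phin n lo hi x \<and> phin n lo hi x \<le> 1"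
proof -
  have "0 \<le> n * bump lo hi x" using assms bump_nonneg[of lo hi x] by simp
  then show ?thesis unfolding phin_def by (simp add: divide_simps)
qed

lemma phin_lim: assumes ord: "\<forall>i. lo$i \<le> hi$i"
  shows "(\<lambda>k. phin (real k) lo hi x) \<longlonglongrightarrow> indicator (box lo hi) x"
proof (cases "x \<in> box lo hi")
  case True
  define b where "b = bump lo hi x"
  have b: "b > 0" using True bump_pos_iff[OF ord] b_def by blast
  have "(\<lambda>k. real k * b / (1 + real k * b)) \<longlonglongrightarrow> 1"
    using b by real_asymp
  then show ?thesis using True by (simp add: phin_def b_def)
next
  case False
  have "bump lo hi x = 0" using bump_zero[OF ord] False by blast
  then show ?thesis using False by (simp add: phin_def)
qed

lemma phin_cont: assumes "n \<ge> 0" shows "continuous_on UNIV (phin n lo hi)"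
proof -
  have nz: "1 + n * bump lo hi x \<noteq> 0" for x
  proof -
    have "0 \<le> n * bump lo hi x" using assms bump_nonneg[of lo hi x] by simp
    then show ?thesis by linarith
  qed
  show ?thesis unfolding phin_def[abs_def]
    by (intro continuous_intros bump_cont) (simp add: nz)
qed

lemma box_int_zero:
  fixes g :: "R3 \<Rightarrow> real"
  assumes gm: "g \<in> borel_measurable lebesgue"
    and H: "\<And>\<phi> D. test_fun \<phi> D \<Longrightarrow> integrable lebesgue (\<lambda>x. g x * \<phi> x) \<and> (LINT x|lebesgue. g x * \<phi> x) = 0"
  shows "integrable lebesgue (\<lambda>x. g x * indicator (box lo hi) x) \<and> (LINT x|lebesgue. g x * indicator (box lo hi) x) = 0"
proof (cases "\<forall>i. lo$i \<le> hi$i")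
  case False
  then obtain i where i: "hi$i < lo$i" by (auto simp: not_le)
  have "box lo hi = {}"
  proof (rule ccontr)
    assume "box lo hi \<noteq> {}"
    then obtain x where "x \<in> box lo hi" by blast
    then have "lo$i < x$i \<and> x$i < hi$i" by (simp add: mem_box_cart(1))
    with i show False by linarith
  qed
  then show ?thesis by simp
next
  case ord: True
  define lo' :: R3 where "lo' = (\<chi> i. lo$i - 1)"
  define hi' :: R3 where "hi' = (\<chi> i. hi$i + 1)"
  have ord': "\<forall>i. lo'$i \<le> hi'$i"
  proof
    fix i show "lo'$i \<le> hi'$i" using ord[rule_format, of i] by (simp add: lo'_def hi'_def)
  qed
  define w where "w = (\<lambda>x. \<bar>g x * bump lo' hi' x\<bar>)"
  have wi: "integrable lebesgue w"
    unfolding w_def using H[OF test_fun_bump[OF ord']] by (intro integrable_abs) blast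
  define s where "s = (\<lambda>k x. g x * phin (real k) lo hi x)"
  define f where "f = (\<lambda>x. g x * indicator (box lo hi) x)"
  have fm: "f \<in> borel_measurable lebesgue"
    unfolding f_def using gm by (intro borel_measurable_times borel_measurable_indicator) auto
  have sm: "s k \<in> borel_measurable lebesgue" for k
  proof -
    have "phin (real k) lo hi \<in> borel_measurable lebesgue"
      by (intro borel_to_leb borel_measurable_continuous_onI phin_cont) simp
    then show ?thesis unfolding s_def using gm by (intro borel_measurable_times) auto
  qed
  have lim: "AE x in lebesgue. (\<lambda>k. s k x) \<longlonglongrightarrow> f x"
    unfolding s_def f_def by (intro always_eventually allI tendsto_mult tendsto_const phin_lim[OF ord])
  have bound: "AE x in lebesgue. norm (s k x) \<le> w x" for k
  proof (intro always_eventually allI)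
    fix x
    have b: "0 \<le> phin (real k) lo hi x \<and> phin (real k) lo hi x \<le> 1" using phin_bounds by simp
    show "norm (s k x) \<le> w x"
    proof (cases "x \<in> box lo hi")
      case True
      then have "1 \<le> bump lo' hi' x" unfolding lo'_def hi'_def
        using bump_ge1 box_subset_cbox by blast
      then have "phin (real k) lo hi x \<le> bump lo' hi' x" using b by linarith
      then have "\<bar>g x\<bar> * phin (real k) lo hi x \<le> \<bar>g x\<bar> * bump lo' hi' x"
        by (intro mult_left_mono) auto
      then show ?thesis unfolding s_def w_def using b bump_nonneg[of lo' hi' x]
        by (simp add: abs_mult)
    next
      case False
      have "bump lo hi x = 0" using bump_zero[OF ord] False by blast
      then show ?thesis unfolding s_def w_def phin_def by simp
    qed
  qed
  have fi: "integrable lebesgue f"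
    by (rule integrable_dominated_convergence[OF fm sm wi lim bound])
  have L: "(\<lambda>k. integral\<^sup>L lebesgue (s k)) \<longlonglongrightarrow> integral\<^sup>L lebesgue f"
    by (rule integral_dominated_convergence[OF fm sm wi lim bound])
  have "integral\<^sup>L lebesgue (s k) = 0" for k
    unfolding s_def using H[OF test_fun_phin[OF _ ord, of "real k"]] by simp
  then have "(\<lambda>k. integral\<^sup>L lebesgue (s k)) = (\<lambda>k. 0)" by simp
  with L have "(\<lambda>k. 0::real) \<longlonglongrightarrow> integral\<^sup>L lebesgue f" by simp
  then have "integral\<^sup>L lebesgue f = 0"
    using LIMSEQ_unique[OF tendsto_const] by metis
  then show ?thesis using fi unfolding f_def by simp
qed

lemma box_density_eq:
  fixes h :: "R3 \<Rightarrow> real"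
  assumes hm: "h \<in> borel_measurable lborel" and hi: "integrable lborel h"
    and Z: "\<And>lo hi. (LINT x|lborel. h x * indicator (box lo hi) x) = 0"
  shows "AE x in lborel. h x = 0"
proof -
  define M1 where "M1 = density lborel (\<lambda>x. ennreal (h x))"
  define M2 where "M2 = density lborel (\<lambda>x. ennreal (- h x))"
  have fin1: "(\<integral>\<^sup>+x. ennreal (h x) \<partial>lborel) \<noteq> \<infinity>" and fin2: "(\<integral>\<^sup>+x. ennreal (- h x) \<partial>lborel) \<noteq> \<infinity>"
    using hi unfolding real_integrable_def by auto
  have eqbox: "emeasure M1 (box lo hi) = emeasure M2 (box lo hi)" for lo hi
  proof -
    let ?k = "\<lambda>x. h x * indicator (box lo hi) x"
    have ki: "integrable lborel ?k"
      using integrable_mult_indicator[OF _ hi, of "box lo hi"] by (simp add: mult.commute)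
    have f1: "(\<integral>\<^sup>+x. ennreal (?k x) \<partial>lborel) \<noteq> \<infinity>" and f2: "(\<integral>\<^sup>+x. ennreal (- ?k x) \<partial>lborel) \<noteq> \<infinity>"
      using ki unfolding real_integrable_def by auto
    have "enn2real (\<integral>\<^sup>+x. ennreal (?k x) \<partial>lborel) = enn2real (\<integral>\<^sup>+x. ennreal (- ?k x) \<partial>lborel)"
      using real_lebesgue_integral_def[OF ki] Z[of lo hi] by simp
    then have e: "(\<integral>\<^sup>+x. ennreal (?k x) \<partial>lborel) = (\<integral>\<^sup>+x. ennreal (- ?k x) \<partial>lborel)"
    proof -
      let ?a = "(\<integral>\<^sup>+x. ennreal (?k x) \<partial>lborel)" and ?b = "(\<integral>\<^sup>+x. ennreal (- ?k x) \<partial>lborel)"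
      have "?a = ennreal (enn2real ?a)" using f1 by (simp add: less_top)
      also have "\<dots> = ennreal (enn2real ?b)" using \<open>enn2real ?a = enn2real ?b\<close> by simp
      also have "\<dots> = ?b" using f2 by (simp add: less_top)
      finally show ?thesis .
    qed
    have "emeasure M1 (box lo hi) = (\<integral>\<^sup>+x. ennreal (h x) * indicator (box lo hi) x \<partial>lborel)"
      unfolding M1_def using hm by (intro emeasure_density) auto
    also have "\<dots> = (\<integral>\<^sup>+x. ennreal (?k x) \<partial>lborel)" by (rule nn_integral_set_ennreal)
    also have "\<dots> = (\<integral>\<^sup>+x. ennreal (- ?k x) \<partial>lborel)" by (rule e)
    also have "\<dots> = (\<integral>\<^sup>+x. ennreal (- h x) * indicator (box lo hi) x \<partial>lborel)"
      by (subst nn_integral_set_ennreal) simp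
    also have "\<dots> = emeasure M2 (box lo hi)"
      unfolding M2_def using hm by (intro emeasure_density[symmetric]) auto
    finally show ?thesis .
  qed
  have "M1 = M2"
  proof (rule measure_eqI_generator_eq[where E="range (\<lambda>(a, b). box a b :: R3 set)" and \<Omega>=UNIV
        and A="\<lambda>n::nat. box (- (real n *\<^sub>R One)) (real n *\<^sub>R One)"])
    show "Int_stable (range (\<lambda>(a, b). box a b :: R3 set))"
      by (auto simp: Int_stable_def box_Int_box)
    show "range (\<lambda>(a, b). box a b :: R3 set) \<subseteq> Pow UNIV" by simp
    show "emeasure M1 X = emeasure M2 X" if "X \<in> range (\<lambda>(a, b). box a b :: R3 set)" for X
      using that eqbox by auto
    show "sets M1 = sigma_sets UNIV (range (\<lambda>(a, b). box a b :: R3 set))"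
      unfolding M1_def by (simp add: borel_eq_box)
    show "sets M2 = sigma_sets UNIV (range (\<lambda>(a, b). box a b :: R3 set))"
      unfolding M2_def by (simp add: borel_eq_box)
    show "range (\<lambda>n::nat. box (- (real n *\<^sub>R One)) (real n *\<^sub>R One)) \<subseteq> range (\<lambda>(a, b). box a b :: R3 set)"
      by auto
    show "(\<Union>n::nat. box (- (real n *\<^sub>R One)) (real n *\<^sub>R One)) = (UNIV :: R3 set)"
      using UN_box_eq_UNIV by auto
    show "emeasure M1 (box (- (real n *\<^sub>R One)) (real n *\<^sub>R One)) \<noteq> \<infinity>" for n :: nat
    proof -
      have "emeasure M1 (box (- (real n *\<^sub>R One)) (real n *\<^sub>R One)) \<le> emeasure M1 UNIV"
        by (rule emeasure_mono) (auto simp: M1_def)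
      also have "\<dots> = (\<integral>\<^sup>+x. ennreal (h x) \<partial>lborel)"
        unfolding M1_def using hm by (subst emeasure_density) auto
      finally show ?thesis using fin1 by (auto simp: top_unique)
    qed
  qed
  then have "AE x in lborel. ennreal (h x) = ennreal (- h x)"
    unfolding M1_def M2_def using hm by (intro sigma_finite_measure.density_unique[OF sigma_finite_lborel]) auto
  then show ?thesis
  proof (rule AE_mp[OF _ always_eventually, OF _ allI, OF _ impI])
    fix x assume "ennreal (h x) = ennreal (- h x)"
    show "h x = 0"
    proof (rule ccontr)
      assume "h x \<noteq> 0"
      then consider "h x > 0" | "h x < 0" by linarith
      then show False
      proof cases
        case 1
        then have "ennreal (- h x) = 0" by (intro ennreal_neg) simp
        moreover have "ennreal (h x) \<noteq> 0" using 1 by (simp add: ennreal_eq_0_iff)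
        ultimately show False using \<open>ennreal (h x) = ennreal (- h x)\<close> by simp
      next
        case 2
        then have "ennreal (h x) = 0" by (intro ennreal_neg) simp
        moreover have "ennreal (- h x) \<noteq> 0" using 2 by (simp add: ennreal_eq_0_iff)
        ultimately show False using \<open>ennreal (h x) = ennreal (- h x)\<close> by simp
      qed
    qed
  qed
qed


lemma fund_lemma:
  fixes g :: "R3 \<Rightarrow> real"
  assumes gm: "g \<in> borel_measurable lebesgue"
    and H: "\<And>\<phi> D. test_fun \<phi> D \<Longrightarrow> integrable lebesgue (\<lambda>x. g x * \<phi> x) \<and> (LINT x|lebesgue. g x * \<phi> x) = 0"
  shows "AE x in lebesgue. g x = 0"
proof -
  have BZ: "integrable lebesgue (\<lambda>x. g x * indicator (box lo hi) x) \<and> (LINT x|lebesgue. g x * indicator (box lo hi) x) = 0" for lo hi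
    by (rule box_int_zero[OF gm]) (rule H)
  define C where "C = (\<lambda>n::nat. box (\<chi> i. - real n) (\<chi> i. real n) :: R3 set)"
  have loc: "AE x in lebesgue. x \<in> C n \<longrightarrow> g x = 0" for n
  proof -
    define f where "f = (\<lambda>x. g x * indicator (C n) x)"
    have fi: "integrable lebesgue f" unfolding f_def C_def using BZ by blast
    have fm: "f \<in> borel_measurable lebesgue" using fi by (rule borel_measurable_integrable)
    obtain fh where fhm: "fh \<in> borel_measurable lborel" and ae: "AE x in lborel. f x = fh x"
      using completion_ex_borel_measurable_real[OF fm] by blast
    have ae': "AE x in lebesgue. f x = fh x" by (rule AE_completion[OF ae])
    have fhm': "fh \<in> borel_measurable lebesgue" using fhm by (rule measurable_completion)
    have fhi': "integrable lebesgue fh" using fi integrable_cong_AE[OF fm fhm' ae'] by simp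
    have fhi: "integrable lborel fh" using fhi' integrable_completion[OF fhm] by simp
    have Z: "(LINT x|lborel. fh x * indicator (box lo hi) x) = 0" for lo hi
    proof -
      have m1: "(\<lambda>x. fh x * indicator (box lo hi) x) \<in> borel_measurable lborel"
        using fhm by (intro borel_measurable_times borel_measurable_indicator) auto
      have "(LINT x|lborel. fh x * indicator (box lo hi) x) = (LINT x|lebesgue. fh x * indicator (box lo hi) x)"
        using integral_completion[OF m1] by simp
      also have "\<dots> = (LINT x|lebesgue. f x * indicator (box lo hi) x)"
      proof (rule integral_cong_AE)
        show "(\<lambda>x. fh x * indicator (box lo hi) x) \<in> borel_measurable lebesgue"
          using m1 by (rule measurable_completion)
        show "(\<lambda>x. f x * indicator (box lo hi) x) \<in> borel_measurable lebesgue"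
          using fm by (intro borel_measurable_times borel_measurable_indicator) auto
        show "AE x in lebesgue. fh x * indicator (box lo hi) x = f x * indicator (box lo hi) x"
          using ae' by eventually_elim simp
      qed
      also have "\<dots> = (LINT x|lebesgue. g x * indicator (C n \<inter> box lo hi) x)"
        unfolding f_def by (intro Bochner_Integration.integral_cong) (auto simp: indicator_def)
      also have "\<dots> = 0"
      proof -
        obtain a b where "C n \<inter> box lo hi = box a b" unfolding C_def using box_Int_box by blast
        then show ?thesis using BZ[of a b] by simp
      qed
      finally show ?thesis .
    qed
    have "AE x in lborel. fh x = 0" by (rule box_density_eq[OF fhm fhi Z])
    then have "AE x in lebesgue. fh x = 0" by (rule AE_completion)
    with ae' show ?thesis
      by eventually_elim (auto simp: f_def)
  qed
  then have "AE x in lebesgue. \<forall>n. x \<in> C n \<longrightarrow> g x = 0"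
    using AE_all_countable[of "\<lambda>n x. x \<in> C n \<longrightarrow> g x = 0" lebesgue] by blast
  moreover have "\<exists>n. x \<in> C n" for x
  proof -
    obtain n :: nat where n: "norm x < real n" using reals_Archimedean2 by blast
    have "- real n < x$i \<and> x$i < real n" for i using component_le_norm_cart[of x i] n by linarith
    then have "x \<in> C n" unfolding C_def by (simp add: mem_box_cart(1))
    then show ?thesis by blast
  qed
  ultimately show ?thesis by (auto elim: AE_mp)
qed

lemma weak_grad_unique:
  assumes w1: "weak_grad w G1" and w2: "weak_grad w G2"
  shows "AE x in lebesgue. G1 x = G2 x"
proof -
  have comp: "AE x in lebesgue. G1 x $ i - G2 x $ i = 0" for i
  proof (rule fund_lemma)
    have "G1 \<in> borel_measurable lebesgue" "G2 \<in> borel_measurable lebesgue"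
      using w1 w2 by (auto simp: weak_grad_def)
    moreover have "(\<lambda>x::R3. x $ i) \<in> borel_measurable borel"
      by (intro borel_measurable_continuous_onI continuous_on_component continuous_on_id)
    ultimately have "(\<lambda>x. G1 x $ i) \<in> borel_measurable lebesgue" "(\<lambda>x. G2 x $ i) \<in> borel_measurable lebesgue"
      using measurable_compose by blast+
    then show "(\<lambda>x. G1 x $ i - G2 x $ i) \<in> borel_measurable lebesgue" by measurable
    fix \<phi> D assume tf: "test_fun \<phi> D"
    from w1 tf have a1: "integrable lebesgue (\<lambda>x. G1 x $ i * \<phi> x)"
      and b1: "(LINT x|lebesgue. w x * D x (axis i 1)) = - (LINT x|lebesgue. G1 x $ i * \<phi> x)"
      unfolding weak_grad_def by blast+
    from w2 tf have a2: "integrable lebesgue (\<lambda>x. G2 x $ i * \<phi> x)"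
      and b2: "(LINT x|lebesgue. w x * D x (axis i 1)) = - (LINT x|lebesgue. G2 x $ i * \<phi> x)"
      unfolding weak_grad_def by blast+
    have e: "(\<lambda>x. (G1 x $ i - G2 x $ i) * \<phi> x) = (\<lambda>x. G1 x $ i * \<phi> x - G2 x $ i * \<phi> x)"
      by (simp add: algebra_simps)
    show "integrable lebesgue (\<lambda>x. (G1 x $ i - G2 x $ i) * \<phi> x) \<and> (LINT x|lebesgue. (G1 x $ i - G2 x $ i) * \<phi> x) = 0"
      unfolding e using a1 a2 b1 b2 by (simp add: Bochner_Integration.integral_diff)
  qed
  then have "AE x in lebesgue. \<forall>i. G1 x $ i - G2 x $ i = 0"
    using AE_all_countable[of "\<lambda>i x. G1 x $ i - G2 x $ i = 0" lebesgue] by blast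
  then show ?thesis by eventually_elim (simp add: vec_eq_iff)
qed

lemma grad_sq_eq:
  assumes wg: "weak_grad w H" and hi: "integrable lebesgue (\<lambda>x. (norm (H x))\<^sup>2)"
  shows "grad_sq w = (LINT x|lebesgue. (norm (H x))\<^sup>2)"
proof -
  define G where "G = (SOME G. weak_grad w G \<and> integrable lebesgue (\<lambda>x. (norm (G x))\<^sup>2))"
  have "weak_grad w G \<and> integrable lebesgue (\<lambda>x. (norm (G x))\<^sup>2)"
    unfolding G_def by (rule someI[of _ H]) (use wg hi in blast)
  then have wG: "weak_grad w G" by blast
  have ae: "AE x in lebesgue. G x = H x" by (rule weak_grad_unique[OF wG wg])
  have "G \<in> borel_measurable lebesgue" "H \<in> borel_measurable lebesgue"
    using wG wg by (auto simp: weak_grad_def)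
  then have m: "(\<lambda>x. (norm (G x))\<^sup>2) \<in> borel_measurable lebesgue" "(\<lambda>x. (norm (H x))\<^sup>2) \<in> borel_measurable lebesgue"
    by measurable
  have "grad_sq w = (LINT x|lebesgue. (norm (G x))\<^sup>2)" unfolding grad_sq_def G_def ..
  also have "\<dots> = (LINT x|lebesgue. (norm (H x))\<^sup>2)"
    by (rule integral_cong_AE[OF m]) (use ae in eventually_elim, simp)
  finally show ?thesis .
qed

lemma grad_sq_dil:
  assumes t: "t > 0" and u: "u \<in> D12"
  shows "grad_sq (dil t u) = t^3 * grad_sq u"
proof -
  obtain G where wg: "weak_grad u G" and gi: "integrable lebesgue (\<lambda>x. (norm (G x))\<^sup>2)"
    using u by (auto simp: D12_def)
  have "grad_sq (dil t u) = (LINT x|lebesgue. (norm (t^3 *\<^sub>R G (t *\<^sub>R x)))\<^sup>2)"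
    by (rule grad_sq_eq[OF weak_grad_dil[OF t wg] grad_int_dil(1)[OF t gi]])
  also have "\<dots> = t^3 * (LINT x|lebesgue. (norm (G x))\<^sup>2)" by (rule grad_int_dil(2)[OF t gi])
  also have "\<dots> = t^3 * grad_sq u" using grad_sq_eq[OF wg gi] by simp
  finally show ?thesis .
qed

lemma grad_sq_nonneg: "0 \<le> grad_sq u"
  unfolding grad_sq_def by (rule Bochner_Integration.integral_nonneg) simp

lemma Kker_nonneg: assumes "a > 0" shows "0 \<le> Kker a z"
proof -
  have "exp (- norm z / a) \<le> 1" using assms by simp
  then show ?thesis unfolding Kker_def by (intro divide_nonneg_nonneg) auto
qed

lemma Kker_borel: "Kker a \<in> borel_measurable borel"
  unfolding Kker_def[abs_def] by measurable

lemma Lker_borel: "Lker a \<in> borel_measurable borel"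
  unfolding Lker_def[abs_def] by measurable

lemma pair_meas:
  fixes k :: "R3 \<Rightarrow> real" and r :: "R3 \<Rightarrow> real"
  assumes k: "k \<in> borel_measurable borel" and r: "r \<in> borel_measurable borel"
  shows "(\<lambda>(x, y). k (x - y) * r y) \<in> borel_measurable (lborel \<Otimes>\<^sub>M lborel)"
proof -
  have "(\<lambda>p::R3\<times>R3. fst p - snd p) \<in> borel_measurable (lborel \<Otimes>\<^sub>M lborel)" by measurable
  then have "(\<lambda>p::R3\<times>R3. k (fst p - snd p)) \<in> borel_measurable (lborel \<Otimes>\<^sub>M lborel)"
    using measurable_compose k by blast
  moreover have "(\<lambda>p::R3\<times>R3. r (snd p)) \<in> borel_measurable (lborel \<Otimes>\<^sub>M lborel)"
    using measurable_compose[OF measurable_snd] r by simp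
  ultimately have "(\<lambda>p::R3\<times>R3. k (fst p - snd p) * r (snd p)) \<in> borel_measurable (lborel \<Otimes>\<^sub>M lborel)"
    by (rule borel_measurable_times)
  then show ?thesis by (simp add: case_prod_beta')
qed


lemma GI:
  fixes k :: "R3 \<Rightarrow> real" and \<rho> :: "R3 \<Rightarrow> real"
  assumes a: "a > 0" and km: "k \<in> borel_measurable borel" and C: "C \<ge> 0"
    and kb: "\<And>z. \<bar>k z\<bar> \<le> C * Kker a z"
    and rm: "\<rho> \<in> borel_measurable lebesgue" and rn: "\<And>x. 0 \<le> \<rho> x"
    and fin: "Vnn a \<rho> \<rho> < \<infinity>"
  shows "AE x in lebesgue. integrable lebesgue (\<lambda>y. k (x - y) * \<rho> x * \<rho> y)"
    and "integrable lebesgue (\<lambda>x. LINT y|lebesgue. k (x - y) * \<rho> x * \<rho> y)"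
proof -
  obtain \<rho>' where rm': "\<rho>' \<in> borel_measurable lborel" and ae: "AE x in lborel. \<rho> x = \<rho>' x"
    using completion_ex_borel_measurable_real[OF rm] by blast
  have ae': "AE y in lebesgue. \<rho> y = \<rho>' y" by (rule AE_completion[OF ae])
  have rmb: "\<rho>' \<in> borel_measurable borel" using rm' by simp
  have kxm: "(\<lambda>y. k (x - y)) \<in> borel_measurable lebesgue" for x
    by (intro borel_to_leb measurable_compose[OF _ km]) measurable
  have Km: "Kker a \<in> borel_measurable borel" by (rule Kker_borel)
  have Kxm: "(\<lambda>y. Kker a (x - y)) \<in> borel_measurable lebesgue" for x
    by (intro borel_to_leb measurable_compose[OF _ Km]) measurable
  define N where "N = (\<lambda>x. \<integral>\<^sup>+ y. ennreal (Kker a (x - y) * \<rho> y) \<partial>lebesgue)"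
  define H where "H = (\<lambda>x. \<integral>\<^sup>+ y. ennreal (Kker a (x - y) * \<rho> x * \<rho> y) \<partial>lebesgue)"
  have HN: "H x = ennreal (\<rho> x) * N x" for x
  proof -
    have "H x = (\<integral>\<^sup>+ y. ennreal (\<rho> x) * ennreal (Kker a (x - y) * \<rho> y) \<partial>lebesgue)"
      unfolding H_def using rn Kker_nonneg[OF a]
      by (intro nn_integral_cong) (simp add: ennreal_mult'[symmetric] mult_ac)
    also have "\<dots> = ennreal (\<rho> x) * N x"
      unfolding N_def using Kxm rm by (intro nn_integral_cmult) measurable
    finally show ?thesis .
  qed
  have Nb: "N x = (\<integral>\<^sup>+ y. ennreal (Kker a (x - y) * \<rho>' y) \<partial>lborel)" for x
  proof -
    have "N x = (\<integral>\<^sup>+ y. ennreal (Kker a (x - y) * \<rho>' y) \<partial>lebesgue)"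
      unfolding N_def by (rule nn_integral_cong_AE) (use ae' in eventually_elim, simp)
    also have "\<dots> = (\<integral>\<^sup>+ y. ennreal (Kker a (x - y) * \<rho>' y) \<partial>lborel)"
      by (rule nn_integral_completion)
    finally show ?thesis .
  qed
  have Nm: "N \<in> borel_measurable lebesgue"
  proof -
    have "(\<lambda>x. \<integral>\<^sup>+ y. ennreal (Kker a (x - y) * \<rho>' y) \<partial>lborel) \<in> borel_measurable lborel"
    proof (rule lborel.borel_measurable_nn_integral)
      have "(\<lambda>(x, y). Kker a (x - y) * \<rho>' y) \<in> borel_measurable (lborel \<Otimes>\<^sub>M lborel)"
        by (rule pair_meas[OF Km rmb])
      then show "(\<lambda>(x, y). ennreal (Kker a (x - y) * \<rho>' y)) \<in> borel_measurable (lborel \<Otimes>\<^sub>M lborel)"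
        using measurable_compose[OF _ measurable_ennreal] by (simp add: case_prod_beta')
    qed
    then show ?thesis unfolding Nb[abs_def] by (rule measurable_completion)
  qed
  have Hm: "H \<in> borel_measurable lebesgue"
    unfolding HN[abs_def] using Nm rm by measurable
  have Hfin: "integral\<^sup>N lebesgue H \<noteq> \<infinity>"
    using fin unfolding Vnn_def H_def by simp
  have aeH: "AE x in lebesgue. H x \<noteq> \<infinity>" by (rule nn_integral_PInf_AE[OF Hm Hfin])
  have fm: "(\<lambda>y. k (x - y) * \<rho> x * \<rho> y) \<in> borel_measurable lebesgue" for x
    using kxm rm by measurable
  have nb: "(\<integral>\<^sup>+ y. ennreal (norm (k (x - y) * \<rho> x * \<rho> y)) \<partial>lebesgue) \<le> ennreal C * H x" for x
  proof -
    have "(\<integral>\<^sup>+ y. ennreal (norm (k (x - y) * \<rho> x * \<rho> y)) \<partial>lebesgue)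
        \<le> (\<integral>\<^sup>+ y. ennreal C * ennreal (Kker a (x - y) * \<rho> x * \<rho> y) \<partial>lebesgue)"
    proof (rule nn_integral_mono)
      fix y
      have "norm (k (x - y) * \<rho> x * \<rho> y) = \<bar>k (x - y)\<bar> * (\<rho> x * \<rho> y)"
        using rn[of x] rn[of y] by (simp add: abs_mult)
      also have "\<dots> \<le> C * Kker a (x - y) * (\<rho> x * \<rho> y)"
        using kb[of "x - y"] rn[of x] rn[of y] by (intro mult_right_mono) auto
      finally have "norm (k (x - y) * \<rho> x * \<rho> y) \<le> C * (Kker a (x - y) * \<rho> x * \<rho> y)"
        by (simp add: mult_ac)
      then show "ennreal (norm (k (x - y) * \<rho> x * \<rho> y)) \<le> ennreal C * ennreal (Kker a (x - y) * \<rho> x * \<rho> y)"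
        using C by (simp add: ennreal_mult'[symmetric] ennreal_leI)
    qed
    also have "\<dots> = ennreal C * H x"
      unfolding H_def
      by (intro nn_integral_cmult measurable_compose[OF _ measurable_ennreal] borel_measurable_times measurable_const Kxm rm) simp
    finally show ?thesis .
  qed
  show "AE x in lebesgue. integrable lebesgue (\<lambda>y. k (x - y) * \<rho> x * \<rho> y)"
    using aeH
  proof eventually_elim
    case (elim x)
    show ?case
    proof (rule integrableI_bounded[OF fm])
      have "ennreal C * H x < \<infinity>" using elim by (simp add: ennreal_mult_less_top less_top)
      then show "(\<integral>\<^sup>+ y. ennreal (norm (k (x - y) * \<rho> x * \<rho> y)) \<partial>lebesgue) < \<infinity>"
        using nb[of x] by (meson le_less_trans)
    qed
  qed
  define F where "F = (\<lambda>x. LINT y|lebesgue. k (x - y) * \<rho> x * \<rho> y)"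
  have Feq: "F x = \<rho> x * (LINT y|lborel. k (x - y) * \<rho>' y)" for x
  proof -
    have "F x = (LINT y|lebesgue. \<rho> x * (k (x - y) * \<rho> y))"
      unfolding F_def by (simp add: mult_ac)
    also have "\<dots> = \<rho> x * (LINT y|lebesgue. k (x - y) * \<rho> y)" by simp
    also have "(LINT y|lebesgue. k (x - y) * \<rho> y) = (LINT y|lebesgue. k (x - y) * \<rho>' y)"
    proof (rule integral_cong_AE)
      show "(\<lambda>y. k (x - y) * \<rho> y) \<in> borel_measurable lebesgue" using kxm rm by measurable
      have "\<rho>' \<in> borel_measurable lebesgue" using rm' by (rule measurable_completion)
      then show "(\<lambda>y. k (x - y) * \<rho>' y) \<in> borel_measurable lebesgue" using kxm by measurable
      show "AE y in lebesgue. k (x - y) * \<rho> y = k (x - y) * \<rho>' y" using ae' by eventually_elim simp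
    qed
    also have "(LINT y|lebesgue. k (x - y) * \<rho>' y) = (LINT y|lborel. k (x - y) * \<rho>' y)"
    proof (rule integral_completion)
      have "(\<lambda>y. k (x - y)) \<in> borel_measurable borel" by (intro measurable_compose[OF _ km]) measurable
      then show "(\<lambda>y. k (x - y) * \<rho>' y) \<in> borel_measurable lborel" using rmb by simp
    qed
    finally show ?thesis .
  qed
  have Fm: "F \<in> borel_measurable lebesgue"
  proof -
    have "(\<lambda>x. LINT y|lborel. k (x - y) * \<rho>' y) \<in> borel_measurable lborel"
      by (rule lborel.borel_measurable_lebesgue_integral) (rule pair_meas[OF km rmb])
    then have "(\<lambda>x. LINT y|lborel. k (x - y) * \<rho>' y) \<in> borel_measurable lebesgue"
      by (rule measurable_completion)
    then show ?thesis unfolding Feq[abs_def] using rm by measurable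
  qed
  show "integrable lebesgue (\<lambda>x. LINT y|lebesgue. k (x - y) * \<rho> x * \<rho> y)"
    unfolding F_def[symmetric]
  proof (rule integrableI_bounded[OF Fm])
    have "(\<integral>\<^sup>+ x. ennreal (norm (F x)) \<partial>lebesgue) \<le> (\<integral>\<^sup>+ x. ennreal C * H x \<partial>lebesgue)"
    proof (rule nn_integral_mono)
      fix x
      show "ennreal (norm (F x)) \<le> ennreal C * H x"
      proof (cases "integrable lebesgue (\<lambda>y. k (x - y) * \<rho> x * \<rho> y)")
        case True
        have "ennreal (norm (F x)) \<le> (\<integral>\<^sup>+ y. ennreal (norm (k (x - y) * \<rho> x * \<rho> y)) \<partial>lebesgue)"
          unfolding F_def by (rule integral_norm_bound_ennreal[OF True])
        then show ?thesis using nb[of x] by (rule order_trans)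
      next
        case False
        then show ?thesis unfolding F_def by (simp add: not_integrable_integral_eq)
      qed
    qed
    also have "\<dots> = ennreal C * integral\<^sup>N lebesgue H"
      using Hm by (rule nn_integral_cmult)
    also have "\<dots> < \<infinity>" using Hfin by (simp add: ennreal_mult_less_top less_top)
    finally show "(\<integral>\<^sup>+ x. ennreal (norm (F x)) \<partial>lebesgue) < \<infinity>" .
  qed
qed

lemma min_at_1:
  fixes f f' :: "real \<Rightarrow> real"
  assumes d: "\<And>t. t > 0 \<Longrightarrow> (f has_real_derivative f' t) (at t)"
    and neg: "\<And>t. 0 < t \<Longrightarrow> t < 1 \<Longrightarrow> f' t \<le> 0"
    and pos: "\<And>t. 1 < t \<Longrightarrow> 0 \<le> f' t"
    and f1: "f 1 = 0" and t: "t > 0"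
  shows "0 \<le> f t"
proof -
  consider "t < 1" | "t = 1" | "t > 1" by linarith
  then show ?thesis
  proof cases
    case 1
    obtain z where z: "t < z" "z < 1" "f 1 - f t = (1 - t) * f' z"
      using MVT2[OF 1, of f f'] d t by force
    have "f' z \<le> 0" using neg z t by simp
    then have "(1 - t) * f' z \<le> 0" using 1 by (simp add: mult_nonneg_nonpos)
    then show ?thesis using z f1 by linarith
  next
    case 2 then show ?thesis using f1 by simp
  next
    case 3
    obtain z where z: "1 < z" "z < t" "f t - f 1 = (t - 1) * f' z"
      using MVT2[OF 3, of f f'] d by force
    have "0 \<le> f' z" using pos z by simp
    then have "0 \<le> (t - 1) * f' z" using 3 by simp
    then show ?thesis using z f1 by linarith
  qed
qed

definition hh :: "real \<Rightarrow> real" where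
  "hh s = 1 - exp (- s) - s / 3 * exp (- s)"

lemma hh_mono: assumes "0 \<le> s1" "s1 \<le> s2" shows "hh s1 \<le> hh s2"
proof (rule DERIV_nonneg_imp_increasing_open[OF assms(2)])
  fix x assume x: "s1 < x" "x < s2"
  have "(hh has_real_derivative exp (- x) * (2/3 + x/3)) (at x)"
    unfolding hh_def[abs_def] by (auto intro!: derivative_eq_intros simp: field_simps)
  moreover have "0 \<le> exp (- x) * (2/3 + x/3)" using x assms by simp
  ultimately show "\<exists>y. (hh has_real_derivative y) (at x) \<and> 0 \<le> y" by blast
next
  show "continuous_on {s1..s2} hh" unfolding hh_def[abs_def] by (intro continuous_intros) auto
qed

lemma hh_nonneg: "0 \<le> s \<Longrightarrow> 0 \<le> hh s"
  using hh_mono[of 0 s] by (simp add: hh_def)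

lemma bern_le: fixes x :: real assumes "0 \<le> x" "x \<le> 1" shows "1 - x ^ n \<le> real n * (1 - x)"
proof (induction n)
  case 0 then show ?case by simp
next
  case (Suc n)
  have "x ^ n * (1 - x) \<le> 1 * (1 - x)" using assms by (intro mult_right_mono) (auto simp: power_le_one)
  then have "1 - x ^ Suc n = (1 - x ^ n) + x ^ n * (1 - x)" by (simp add: algebra_simps)
  also have "\<dots> \<le> real n * (1 - x) + (1 - x)" using Suc \<open>x ^ n * (1 - x) \<le> 1 * (1 - x)\<close> by simp
  finally show ?case by (simp add: algebra_simps)
qed


lemma psi_ineq:
  fixes y t m :: real
  assumes y: "y > 0" and t: "t > 0" and m: "m > 5"
  shows "0 \<le> (1 - exp (- y)) - t^3 * (1 - exp (- (y / t))) - 3 * (1 - t powr m) / m * hh y"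
proof (rule min_at_1[where f="\<lambda>t. (1 - exp (- y)) - t^3 * (1 - exp (- (y / t))) - 3 * (1 - t powr m) / m * hh y"
      and f'="\<lambda>t. - 3 * t^2 * hh (y / t) + 3 * t powr (m - 1) * hh y"])
  fix t :: real assume t: "t > 0"
  have "((\<lambda>t. (1 - exp (- y)) - t^3 * (1 - exp (- (y / t))) - 3 * (1 - t powr m) / m * hh y) has_real_derivative
      (- (3 * t^2 * (1 - exp (- (y / t))) + t^3 * (- (exp (- (y / t)) * (y / t^2))))
        + 3 * (m * t powr (m - 1)) / m * hh y)) (at t)"
    using t m by (auto intro!: derivative_eq_intros simp: power2_eq_square field_simps)
  moreover have "- (3 * t^2 * (1 - exp (- (y / t))) + t^3 * (- (exp (- (y / t)) * (y / t^2))))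
        + 3 * (m * t powr (m - 1)) / m * hh y = - 3 * t^2 * hh (y / t) + 3 * t powr (m - 1) * hh y"
    using t m by (simp add: hh_def power2_eq_square power3_eq_cube field_simps)
  ultimately show "((\<lambda>t. (1 - exp (- y)) - t^3 * (1 - exp (- (y / t))) - 3 * (1 - t powr m) / m * hh y) has_real_derivative
      (- 3 * t^2 * hh (y / t) + 3 * t powr (m - 1) * hh y)) (at t)" by simp
next
  fix t :: real assume t: "0 < t" "t < 1"
  have h1: "hh y \<le> hh (y / t)" using y t by (intro hh_mono) (auto simp: field_simps)
  have h0: "0 \<le> hh y" using y by (intro hh_nonneg) simp
  have p: "t powr (m - 1) \<le> t powr 2" using t m by (intro powr_mono') auto
  have "t powr 2 = t^2" using t by (simp add: powr_numeral)
  then have "t powr (m - 1) * hh y \<le> t^2 * hh y" using p h0 by (intro mult_right_mono) auto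
  also have "\<dots> \<le> t^2 * hh (y / t)" using h1 by (intro mult_left_mono) auto
  finally show "- 3 * t^2 * hh (y / t) + 3 * t powr (m - 1) * hh y \<le> 0" by simp
next
  fix t :: real assume t: "1 < t"
  have h1: "hh (y / t) \<le> hh y" using y t by (intro hh_mono) (auto simp: field_simps)
  have h0: "0 \<le> hh (y / t)" using y t by (intro hh_nonneg) simp
  have p: "t powr 2 \<le> t powr (m - 1)" using t m by (intro powr_mono) auto
  have "t powr 2 = t^2" using t by (simp add: powr_numeral)
  have "t^2 * hh (y / t) \<le> t^2 * hh y" using h1 by (intro mult_left_mono) auto
  also have "\<dots> \<le> t powr (m - 1) * hh y"
    using p \<open>t powr 2 = t^2\<close> hh_nonneg[of y] y by (intro mult_right_mono) auto
  finally show "0 \<le> - 3 * t^2 * hh (y / t) + 3 * t powr (m - 1) * hh y" by simp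
next
  show "(1 - exp (- y)) - 1^3 * (1 - exp (- (y / 1))) - 3 * (1 - 1 powr m) / m * hh y = 0" by simp
qed (rule t)

lemma phi_ineq:
  fixes t m :: real
  assumes t: "t > 0" and m: "m > 5"
  shows "0 \<le> (1 - t^3) / 2 - 3 * (1 - t powr m) / (2 * m)"
proof (rule min_at_1[where f="\<lambda>t. (1 - t^3) / 2 - 3 * (1 - t powr m) / (2 * m)"
      and f'="\<lambda>t. - 3 / 2 * t^2 + 3 / 2 * t powr (m - 1)"])
  fix t :: real assume t: "t > 0"
  have "((\<lambda>t. (1 - t^3) / 2 - 3 * (1 - t powr m) / (2 * m)) has_real_derivative
      (- (3 * t^2) / 2 + 3 * (m * t powr (m - 1)) / (2 * m))) (at t)"
    using t m by (auto intro!: derivative_eq_intros simp: power2_eq_square field_simps)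
  moreover have "- (3 * t^2) / 2 + 3 * (m * t powr (m - 1)) / (2 * m) = - 3 / 2 * t^2 + 3 / 2 * t powr (m - 1)"
    using m by (simp add: field_simps)
  ultimately show "((\<lambda>t. (1 - t^3) / 2 - 3 * (1 - t powr m) / (2 * m)) has_real_derivative
      (- 3 / 2 * t^2 + 3 / 2 * t powr (m - 1))) (at t)" by (metis (no_types, lifting))
next
  fix t :: real assume t: "0 < t" "t < 1"
  have p: "t powr (m - 1) \<le> t powr 2" using t m by (intro powr_mono') auto
  have "t powr 2 = t^2" using t by (simp add: powr_numeral)
  then show "- 3 / 2 * t^2 + 3 / 2 * t powr (m - 1) \<le> 0" using p by simp
next
  fix t :: real assume t: "1 < t"
  have p: "t powr 2 \<le> t powr (m - 1)" using t m by (intro powr_mono) auto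
  have "t powr 2 = t^2" using t by (simp add: powr_numeral)
  then show "0 \<le> - 3 / 2 * t^2 + 3 / 2 * t powr (m - 1)" using p by simp
next
  show "(1 - 1^3) / 2 - 3 * (1 - 1 powr m) / (2 * m) = (0::real)" by simp
qed (rule t)

lemma kernels_at:
  assumes a: "a > 0" and t: "t > 0" and z: "z \<noteq> 0"
  defines "r \<equiv> norm z" and "y \<equiv> norm z / a"
  shows "Kker a z = (1 - exp (- y)) / r" "Kker (a*t) z = (1 - exp (- (y / t))) / r"
    "Lker a z = hh y / r"
  using a t unfolding Kker_def Lker_def hh_def r_def y_def by (simp_all add: field_simps)

lemma kcomb_nonneg:
  assumes a: "a > 0" and t: "t > 0" and m: "m > 5"
  shows "0 \<le> Kker a z - t^3 * Kker (a*t) z - 3 * (1 - t powr m) / m * Lker a z"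
proof (cases "z = 0")
  case True then show ?thesis by (simp add: Kker_def Lker_def)
next
  case False
  define r where "r = norm z"
  define y where "y = norm z / a"
  have r: "r > 0" using False by (simp add: r_def)
  have y: "y > 0" using False a by (simp add: y_def)
  have "Kker a z - t^3 * Kker (a*t) z - 3 * (1 - t powr m) / m * Lker a z
      = ((1 - exp (- y)) - t^3 * (1 - exp (- (y / t))) - 3 * (1 - t powr m) / m * hh y) / r"
    using kernels_at[OF a t False] by (simp add: y_def r_def diff_divide_distrib right_diff_distrib)
  also have "\<dots> \<ge> 0" using psi_ineq[OF y t m] r by simp
  finally show ?thesis by simp
qed

lemma Lker_bounds: assumes a: "a > 0" shows "0 \<le> Lker a z" "Lker a z \<le> Kker a z"
proof -
  show "0 \<le> Lker a z"
  proof (cases "z = 0")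
    case True then show ?thesis by (simp add: Lker_def)
  next
    case False
    have "hh (norm z / a) \<ge> 0" using a by (intro hh_nonneg) simp
    then show ?thesis using kernels_at(3)[OF a _ False, of 1] by simp
  qed
  have "norm z / (3 * a) * exp (- norm z / a) \<ge> 0" using a by simp
  then show "Lker a z \<le> Kker a z" unfolding Lker_def Kker_def using a
    by (simp add: divide_right_mono diff_divide_distrib)
qed

lemma Kker_at_bound:
  assumes a: "a > 0" and t: "t > 0"
  shows "Kker (a*t) z \<le> real (nat \<lceil>1/t\<rceil>) * Kker a z"
proof (cases "z = 0")
  case True then show ?thesis by (simp add: Kker_def)
next
  case False
  define N where "N = nat \<lceil>1/t\<rceil>"
  define r where "r = norm z"
  define y where "y = norm z / a"
  have r: "r > 0" using False by (simp add: r_def)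
  have y: "y > 0" using False a by (simp add: y_def)
  have N: "real N \<ge> 1 / t" unfolding N_def by linarith
  have "y / t \<le> real N * y" using N y t by (simp add: field_simps)
  then have "1 - exp (- (y / t)) \<le> 1 - exp (- (real N * y))" by simp
  also have "exp (- (real N * y)) = exp (- y) ^ N"
    by (metis exp_of_nat_mult mult_minus_right)
  also have "1 - exp (- y) ^ N \<le> real N * (1 - exp (- y))"
    by (rule bern_le) (use y in auto)
  finally have "(1 - exp (- (y / t))) / r \<le> real N * (1 - exp (- y)) / r"
    using r by (simp add: divide_right_mono)
  then show ?thesis
    using kernels_at[OF a t False] by (simp add: y_def r_def N_def)
qed

lemma nested_lin:
  fixes \<rho> :: "R3 \<Rightarrow> real" and k1 k2 k3 :: "R3 \<Rightarrow> real"
  assumes a: "a > 0" and rm: "\<rho> \<in> borel_measurable lebesgue" and rn: "\<And>x. 0 \<le> \<rho> x"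
    and fin: "Vnn a \<rho> \<rho> < \<infinity>"
    and k1: "k1 \<in> borel_measurable borel" "C1 \<ge> 0" "\<And>z. \<bar>k1 z\<bar> \<le> C1 * Kker a z"
    and k2: "k2 \<in> borel_measurable borel" "C2 \<ge> 0" "\<And>z. \<bar>k2 z\<bar> \<le> C2 * Kker a z"
    and k3: "k3 \<in> borel_measurable borel" "C3 \<ge> 0" "\<And>z. \<bar>k3 z\<bar> \<le> C3 * Kker a z"
  shows "(LINT x|lebesgue. LINT y|lebesgue. (k1 (x - y) - \<alpha> * k2 (x - y) - \<beta> * k3 (x - y)) * \<rho> x * \<rho> y)
    = (LINT x|lebesgue. LINT y|lebesgue. k1 (x - y) * \<rho> x * \<rho> y)
      - \<alpha> * (LINT x|lebesgue. LINT y|lebesgue. k2 (x - y) * \<rho> x * \<rho> y)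
      - \<beta> * (LINT x|lebesgue. LINT y|lebesgue. k3 (x - y) * \<rho> x * \<rho> y)"
proof -
  define kc where "kc = (\<lambda>z. k1 z - \<alpha> * k2 z - \<beta> * k3 z)"
  have kcm: "kc \<in> borel_measurable borel" unfolding kc_def using k1(1) k2(1) k3(1) by measurable
  have kcC: "0 \<le> C1 + \<bar>\<alpha>\<bar> * C2 + \<bar>\<beta>\<bar> * C3" using k1(2) k2(2) k3(2) by simp
  have kcb: "\<bar>kc z\<bar> \<le> (C1 + \<bar>\<alpha>\<bar> * C2 + \<bar>\<beta>\<bar> * C3) * Kker a z" for z
  proof -
    have "\<bar>kc z\<bar> \<le> \<bar>k1 z\<bar> + \<bar>\<alpha>\<bar> * \<bar>k2 z\<bar> + \<bar>\<beta>\<bar> * \<bar>k3 z\<bar>"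
      unfolding kc_def by (simp add: abs_mult[symmetric])
    also have "\<dots> \<le> C1 * Kker a z + \<bar>\<alpha>\<bar> * (C2 * Kker a z) + \<bar>\<beta>\<bar> * (C3 * Kker a z)"
      using k1(3)[of z] k2(3)[of z] k3(3)[of z] by (intro add_mono mult_left_mono) auto
    finally show ?thesis by (simp add: algebra_simps)
  qed
  note G1 = GI[OF a k1(1) k1(2) k1(3) rm rn fin]
  note G2 = GI[OF a k2(1) k2(2) k2(3) rm rn fin]
  note G3 = GI[OF a k3(1) k3(2) k3(3) rm rn fin]
  note Gc = GI[OF a kcm kcC kcb rm rn fin]
  have "(LINT x|lebesgue. LINT y|lebesgue. kc (x - y) * \<rho> x * \<rho> y)
      = (LINT x|lebesgue. (LINT y|lebesgue. k1 (x - y) * \<rho> x * \<rho> y)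
          - \<alpha> * (LINT y|lebesgue. k2 (x - y) * \<rho> x * \<rho> y)
          - \<beta> * (LINT y|lebesgue. k3 (x - y) * \<rho> x * \<rho> y))"
  proof (rule integral_cong_AE)
    show "(\<lambda>x. LINT y|lebesgue. kc (x - y) * \<rho> x * \<rho> y) \<in> borel_measurable lebesgue"
      using Gc(2) by (rule borel_measurable_integrable)
    have "integrable lebesgue (\<lambda>x. (LINT y|lebesgue. k1 (x - y) * \<rho> x * \<rho> y)
          - \<alpha> * (LINT y|lebesgue. k2 (x - y) * \<rho> x * \<rho> y)
          - \<beta> * (LINT y|lebesgue. k3 (x - y) * \<rho> x * \<rho> y))"
      using G1(2) G2(2) G3(2) by auto
    then show "(\<lambda>x. (LINT y|lebesgue. k1 (x - y) * \<rho> x * \<rho> y)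
          - \<alpha> * (LINT y|lebesgue. k2 (x - y) * \<rho> x * \<rho> y)
          - \<beta> * (LINT y|lebesgue. k3 (x - y) * \<rho> x * \<rho> y)) \<in> borel_measurable lebesgue"
      by (rule borel_measurable_integrable)
    show "AE x in lebesgue. (LINT y|lebesgue. kc (x - y) * \<rho> x * \<rho> y)
        = (LINT y|lebesgue. k1 (x - y) * \<rho> x * \<rho> y)
          - \<alpha> * (LINT y|lebesgue. k2 (x - y) * \<rho> x * \<rho> y)
          - \<beta> * (LINT y|lebesgue. k3 (x - y) * \<rho> x * \<rho> y)"
      using G1(1) G2(1) G3(1)
    proof eventually_elim
      case (elim x)
      have "(LINT y|lebesgue. kc (x - y) * \<rho> x * \<rho> y)
          = (LINT y|lebesgue. k1 (x - y) * \<rho> x * \<rho> y - \<alpha> * (k2 (x - y) * \<rho> x * \<rho> y) - \<beta> * (k3 (x - y) * \<rho> x * \<rho> y))"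
        unfolding kc_def by (rule Bochner_Integration.integral_cong) (auto simp: algebra_simps)
      also have "\<dots> = (LINT y|lebesgue. k1 (x - y) * \<rho> x * \<rho> y)
          - \<alpha> * (LINT y|lebesgue. k2 (x - y) * \<rho> x * \<rho> y)
          - \<beta> * (LINT y|lebesgue. k3 (x - y) * \<rho> x * \<rho> y)"
        using elim by (simp add: Bochner_Integration.integral_diff)
      finally show ?case .
    qed
  qed
  also have "\<dots> = (LINT x|lebesgue. LINT y|lebesgue. k1 (x - y) * \<rho> x * \<rho> y)
      - \<alpha> * (LINT x|lebesgue. LINT y|lebesgue. k2 (x - y) * \<rho> x * \<rho> y)
      - \<beta> * (LINT x|lebesgue. LINT y|lebesgue. k3 (x - y) * \<rho> x * \<rho> y)"
    using G1(2) G2(2) G3(2) by (simp add: Bochner_Integration.integral_diff)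
  finally show ?thesis unfolding kc_def .
qed


lemma dil_one: "dil 1 u = u"
  by (simp add: dil_def)

lemma I_dil:
  assumes a: "a > 0" and t: "t > 0" and p: "p > 0" and u: "u \<in> D12"
  shows "I_a a q p (dil t u) = 1/2 * (t^3 * grad_sq u) + q\<^sup>2 / 4 * (t^3 * V (a*t) (\<lambda>x. (u x)\<^sup>2) (\<lambda>x. (u x)\<^sup>2))
          - 1/p * (t powr (2*p - 3) * Lp_pow p u)"
  unfolding I_a_def using grad_sq_dil[OF t u] V_dil[OF a t] Lp_dil[OF t p] by simp

theorem corollary5p2:
  fixes a q p :: real and u :: "R3 \<Rightarrow> real"
  assumes "a > 0" and "q \<noteq> 0" and "4 < p" and "p < 6"
    and "u \<in> M_ar a q p"
  shows "(\<forall>t>0. I_a a q p (dil t u) \<le> I_a a q p u)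
         \<and> I_a a q p u = (SUP t\<in>{0<..}. I_a a q p (dil t u))"
proof -
  note a = assms(1)
  have p0: "p > 0" using assms(3) by simp
  define m where "m = 2 * p - 3"
  have m: "m > 5" using assms(3) by (simp add: m_def)
  have uE: "u \<in> E_r a" and J0: "J_a a q p u = 0" using assms(5) by (auto simp: M_ar_def)
  have uD: "u \<in> D12" and fin: "Vnn a (\<lambda>x. (u x)\<^sup>2) (\<lambda>x. (u x)\<^sup>2) < \<infinity>"
    using uE by (auto simp: E_r_def)
  have um: "u \<in> borel_measurable lebesgue" using uD by (simp add: D12_def)
  define \<rho> where "\<rho> = (\<lambda>x. (u x)\<^sup>2)"
  have rm: "\<rho> \<in> borel_measurable lebesgue" unfolding \<rho>_def using um by measurable
  have rn: "0 \<le> \<rho> x" for x unfolding \<rho>_def by simp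
  have fin': "Vnn a \<rho> \<rho> < \<infinity>" using fin unfolding \<rho>_def .
  define A where "A = grad_sq u"
  define B where "B = Lp_pow p u"
  define V1 where "V1 = V a \<rho> \<rho>"
  define W1 where "W1 = W a \<rho> \<rho>"
  have A0: "0 \<le> A" unfolding A_def by (rule grad_sq_nonneg)
  have Jeq: "3/2 * A - (2*p - 3)/p * B + 3 * q\<^sup>2 / 4 * W1 = 0"
    using J0 unfolding J_a_def A_def B_def W1_def \<rho>_def .
  have Beq: "B = p / m * (3/2 * A + 3 * q\<^sup>2 / 4 * W1)"
    using Jeq p0 m unfolding m_def by (simp add: field_simps)
  have Iu: "I_a a q p u = 1/2 * A + q\<^sup>2 / 4 * V1 - 1/p * B"
    unfolding I_a_def A_def B_def V1_def \<rho>_def ..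
  have ineq: "I_a a q p (dil t u) \<le> I_a a q p u" if t: "t > 0" for t
  proof -
    define Vt where "Vt = V (a*t) \<rho> \<rho>"
    define T where "T = t powr m"
    define c where "c = 3 * (1 - T) / m"
    have Id: "I_a a q p (dil t u) = 1/2 * (t^3 * A) + q\<^sup>2 / 4 * (t^3 * Vt) - 1/p * (T * B)"
      using I_dil[OF a t p0 uD, of q] unfolding A_def B_def Vt_def T_def m_def \<rho>_def by simp
    have at: "a * t > 0" using a t by simp
    define N where "N = real (nat \<lceil>1/t\<rceil>)"
    have N0: "N \<ge> 0" unfolding N_def by simp
    have lin: "(LINT x|lebesgue. LINT y|lebesgue. (Kker a (x - y) - t^3 * Kker (a*t) (x - y) - c * Lker a (x - y)) * \<rho> x * \<rho> y)
        = V1 - t^3 * Vt - c * W1"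
      unfolding V1_def Vt_def W1_def V_def W_def
    proof (rule nested_lin[OF a rm rn fin'])
      show "Kker a \<in> borel_measurable borel" "Kker (a*t) \<in> borel_measurable borel" "Lker a \<in> borel_measurable borel"
        by (rule Kker_borel Lker_borel)+
      show "(1::real) \<ge> 0" "N \<ge> 0" "(1::real) \<ge> 0" using N0 by simp_all
      show "\<bar>Kker a z\<bar> \<le> 1 * Kker a z" for z using Kker_nonneg[OF a] by simp
      show "\<bar>Kker (a*t) z\<bar> \<le> N * Kker a z" for z
        using Kker_nonneg[OF at, of z] Kker_at_bound[OF a t, of z] unfolding N_def by simp
      show "\<bar>Lker a z\<bar> \<le> 1 * Kker a z" for z using Lker_bounds[OF a, of z] by simp
    qed
    have nn: "0 \<le> (LINT x|lebesgue. LINT y|lebesgue. (Kker a (x - y) - t^3 * Kker (a*t) (x - y) - c * Lker a (x - y)) * \<rho> x * \<rho> y)"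
    proof (intro Bochner_Integration.integral_nonneg)
      fix x y
      have "0 \<le> Kker a (x - y) - t^3 * Kker (a*t) (x - y) - c * Lker a (x - y)"
        using kcomb_nonneg[OF a t m, of "x - y"] unfolding c_def T_def by simp
      then show "0 \<le> (Kker a (x - y) - t^3 * Kker (a*t) (x - y) - c * Lker a (x - y)) * \<rho> x * \<rho> y"
        using rn[of x] rn[of y] by simp
    qed
    have phi: "0 \<le> (1 - t^3) / 2 - 3 * (1 - T) / (2 * m)"
      using phi_ineq[OF t m] unfolding T_def .
    have diff: "I_a a q p u - I_a a q p (dil t u)
        = A * ((1 - t^3) / 2 - 3 * (1 - T) / (2 * m)) + q\<^sup>2 / 4 * (V1 - t^3 * Vt - c * W1)"
      unfolding Iu Id Beq c_def using p0 m by (simp add: field_simps)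
    have "0 \<le> A * ((1 - t^3) / 2 - 3 * (1 - T) / (2 * m)) + q\<^sup>2 / 4 * (V1 - t^3 * Vt - c * W1)"
      using A0 phi nn lin by simp
    then show ?thesis using diff by simp
  qed
  moreover have "I_a a q p u = (SUP t\<in>{0<..}. I_a a q p (dil t u))"
  proof -
    have "Sup ((\<lambda>t. I_a a q p (dil t u)) ` {0<..}) = I_a a q p u"
    proof (rule cSup_eq_maximum)
      show "I_a a q p u \<in> (\<lambda>t. I_a a q p (dil t u)) ` {0<..}"
        by (rule image_eqI[of _ _ 1]) (simp_all add: dil_one)
      show "x \<le> I_a a q p u" if "x \<in> (\<lambda>t. I_a a q p (dil t u)) ` {0<..}" for x
        using that ineq by auto
    qed
    then show ?thesis by simp
  qed
  ultimately show ?thesis by blast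
qed

end
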